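(* Let $(V,g)$ be a $4$-dimensional oriented Euclidean vector space and let $R \in \operatorname{Sym}^2_B(\Lambda^2 V)$ be Einstein. Denote by $R_\pm$ the restriction of $R$ to $\Lambda^\pm V$ and by $L_\pm$ the orthogonal projection of $L \in \Lambda^2 V$ onto $\Lambda^\pm V$. Then $$ |LR|^2 = |L_+ R_+|^2 + |L_- R_-|^2 \quad \text{for all } L \in \Lambda^2 V. $$ In particular, suppose $e_1,\ldots,e_4$ is an oriented orthonormal basis of $V$ such that the orthonormal basis $\Xi_1 = \frac{1}{\sqrt 2}(e_1\wedge e_2 + e_3 \wedge e_4)$, $\Xi_2 = \frac{1}{\sqrt 2}(e_1\wedge e_3 - e_2 \wedge e_4)$, $\Xi_3 = \frac{1}{\sqrt 2}(e_1\wedge e_4 + e_2 \wedge e_3)$ of $\Lambda^+ V$ and $\Xi_4 = \frac{1}{\sqrt 2}(e_1\wedge e_2 - e_3 \wedge e_4)$, $\Xi_5 = \frac{1}{\sqrt 2}(e_1\wedge e_3 + e_2 \wedge e_4)$, $\Xi_6 = \frac{1}{\sqrt 2}(e_1\wedge e_4 - e_2 \wedge e_3)$ of $\Lambda^- V$ diagonalizes $R$, with $R(\Xi_\alpha,\cdot) = \lambda_\alpha g(\Xi_\alpha,\cdot)$. If $L = \sum_{\alpha=1}^6 a_\alpha \Xi_\alpha$, then $$ |LR|^2 = 4 \sum_{\gamma=1}^6 a_\gamma^2 (\lambda_\alpha - \lambda_\beta)^2 \leq 4(\lambda_{\max} - \lambda_{\min})^2 |L|^2, $$ where for each $\gamma$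 the indices $\alpha < \beta$ are such that $\{\alpha,\beta,\gamma\} = \{1,2,3\}$ or $\{4,5,6\}$.
   Context: $\mathfrak{so}(V)$ is identified with $\Lambda^2 V$ via $(X \wedge Y)(Z) = g(X,Z)Y - g(Y,Z)X$; $\Lambda^2 V$ has the inner product making $\{e_i\wedge e_j\}_{i<j}$ orthonormal. $\operatorname{Sym}^2_B(\Lambda^2 V)$ is the space of symmetric bilinear forms $R$ on $\Lambda^2 V$ whose associated tensor $\operatorname{Rm}(x,y,z,w) = R(x\wedge y, z\wedge w)$ satisfies the first Bianchi identity; $R$ is Einstein if $\operatorname{Ric}(Y,W) = \sum_i \operatorname{Rm}(Y,e_i,W,e_i)$ is a multiple of $g$. $\Lambda^\pm V$ are the $\pm 1$ eigenspaces of the Hodge star. $L$ acts on $\Lambda^2 V$ by $L(x\wedge y) = Lx\wedge y + x\wedge Ly$ (this preserves $\Lambda^\pm V$ for $L \in \Lambda^\pm V$), and on symmetric bilinear forms $S$ on $\Lambda^2 V$ (or on $\Lambda^\pm V$) by $(LS)(\xi,\eta) = -S(L\xi,\eta) - S(\xi,L\eta)$; norms of such forms are $|S|^2 = \sum_{\alpha,\beta} S(\Xi_\alpha,\Xi_\beta)^2$ over an orthonormal basis, and $\lambda_{\max},\lambda_{\min}$ are the largest and smallest eigenvalues of $R$. *)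

theory Defs
  imports "HOL-Analysis.Analysis"
begin

text \<open>Model: V = real^4 with the standard inner product g = (\<bullet>) and the standard
orientation (an ordered basis is positive iff the determinant of the matrix whose rows are the
basis vectors is positive).  Lambda^2 V is identified with so(V), i.e. skew-symmetric 4x4
matrices acting on V, via (X wedge Y)(Z) = g(X,Z) Y - g(Y,Z) X.\<close>

type_synonym vec4 = "real^4"
type_synonym bivec = "real^4^4"

definition wedge :: "vec4 \<Rightarrow> vec4 \<Rightarrow> bivec" where
  "wedge X Y = (\<chi> i j. Y$i * X$j - X$i * Y$j)"

lemma wedge_apply: "wedge X Y *v Z = (X \<bullet> Z) *\<^sub>R Y - (Y \<bullet> Z) *\<^sub>R X"
  unfolding wedge_def
  by (simp add: vec_eq_iff matrix_vector_mult_def inner_vec_def sum_subtractf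
      sum_distrib_left sum_distrib_right algebra_simps)

definition Lambda2 :: "bivec set" where
  "Lambda2 = {A. transpose A = - A}"

text \<open>Inner product on Lambda^2 V making {e_i wedge e_j}_{i<j} orthonormal.\<close>
definition bv_inner :: "bivec \<Rightarrow> bivec \<Rightarrow> real" where
  "bv_inner A B = (1/2) * (\<Sum>i\<in>UNIV. \<Sum>j\<in>UNIV. A$i$j * B$i$j)"

text \<open>Standard basis e_1,...,e_4 (e_4 is the element 4 = 0 of the type 4).\<close>
definition std_e :: "4 \<Rightarrow> vec4" where
  "std_e i = axis i 1"

definition levi :: "4 \<Rightarrow> 4 \<Rightarrow> 4 \<Rightarrow> 4 \<Rightarrow> real" where
  "levi i j k l = det (\<chi> r. std_e (if r = 1 then i else if r = 2 then j else if r = 3 then k else l))"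

text \<open>Hodge star on Lambda^2 V (so that *(e_1 wedge e_2) = e_3 wedge e_4 for the positive
orthonormal basis e).\<close>
definition hodge :: "bivec \<Rightarrow> bivec" where
  "hodge A = (\<chi> i j. (1/2) * (\<Sum>k\<in>UNIV. \<Sum>l\<in>UNIV. levi i j k l * A$k$l))"

definition LambdaP :: "bivec set" where
  "LambdaP = {A \<in> Lambda2. hodge A = A}"

definition LambdaM :: "bivec set" where
  "LambdaM = {A \<in> Lambda2. hodge A = - A}"

definition projP :: "bivec \<Rightarrow> bivec" where
  "projP L = (1/2) *\<^sub>R (L + hodge L)"

definition projM :: "bivec \<Rightarrow> bivec" where
  "projM L = (1/2) *\<^sub>R (L - hodge L)"

text \<open>Action of L on Lambda^2 V: the linear extension of
L(x wedge y) = Lx wedge y + x wedge Ly, which is the commutator (see act_wedge).\<close>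
definition act :: "bivec \<Rightarrow> bivec \<Rightarrow> bivec" where
  "act L A = L ** A - A ** L"

definition form_act :: "bivec \<Rightarrow> (bivec \<Rightarrow> bivec \<Rightarrow> real) \<Rightarrow> (bivec \<Rightarrow> bivec \<Rightarrow> real)" where
  "form_act L S = (\<lambda>\<xi> \<eta>. - S (act L \<xi>) \<eta> - S \<xi> (act L \<eta>))"

definition form_normsq :: "bivec list \<Rightarrow> (bivec \<Rightarrow> bivec \<Rightarrow> real) \<Rightarrow> real" where
  "form_normsq B S = (\<Sum>a\<leftarrow>B. \<Sum>b\<leftarrow>B. (S a b)^2)"

definition Xi :: "(4 \<Rightarrow> vec4) \<Rightarrow> nat \<Rightarrow> bivec" where
  "Xi e \<alpha> = (1 / sqrt 2) *\<^sub>R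
     (if \<alpha> = 1 then wedge (e 1) (e 2) + wedge (e 3) (e 4)
      else if \<alpha> = 2 then wedge (e 1) (e 3) - wedge (e 2) (e 4)
      else if \<alpha> = 3 then wedge (e 1) (e 4) + wedge (e 2) (e 3)
      else if \<alpha> = 4 then wedge (e 1) (e 2) - wedge (e 3) (e 4)
      else if \<alpha> = 5 then wedge (e 1) (e 3) + wedge (e 2) (e 4)
      else wedge (e 1) (e 4) - wedge (e 2) (e 3))"

definition basis2 :: "bivec list" where
  "basis2 = [wedge (std_e 1) (std_e 2), wedge (std_e 1) (std_e 3), wedge (std_e 1) (std_e 4),
             wedge (std_e 2) (std_e 3), wedge (std_e 2) (std_e 4), wedge (std_e 3) (std_e 4)]"

definition basisP :: "bivec list" where
  "basisP = [Xi std_e 1, Xi std_e 2, Xi std_e 3]"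

definition basisM :: "bivec list" where
  "basisM = [Xi std_e 4, Xi std_e 5, Xi std_e 6]"

definition Rm :: "(bivec \<Rightarrow> bivec \<Rightarrow> real) \<Rightarrow> vec4 \<Rightarrow> vec4 \<Rightarrow> vec4 \<Rightarrow> vec4 \<Rightarrow> real" where
  "Rm R x y z w = R (wedge x y) (wedge z w)"

definition SymB :: "(bivec \<Rightarrow> bivec \<Rightarrow> real) \<Rightarrow> bool" where
  "SymB R \<longleftrightarrow> bilinear R \<and> (\<forall>A B. R A B = R B A) \<and>
     (\<forall>x y z w. Rm R x y z w + Rm R y z x w + Rm R z x y w = 0)"

definition Ric :: "(bivec \<Rightarrow> bivec \<Rightarrow> real) \<Rightarrow> vec4 \<Rightarrow> vec4 \<Rightarrow> real" where
  "Ric R Y W = (\<Sum>i\<in>UNIV. Rm R Y (std_e i) W (std_e i))"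

definition Einstein :: "(bivec \<Rightarrow> bivec \<Rightarrow> real) \<Rightarrow> bool" where
  "Einstein R \<longleftrightarrow> (\<exists>c. \<forall>Y W. Ric R Y W = c * (Y \<bullet> W))"

definition eigvals :: "(bivec \<Rightarrow> bivec \<Rightarrow> real) \<Rightarrow> real set" where
  "eigvals R = {\<mu>. \<exists>X\<in>Lambda2. X \<noteq> 0 \<and> (\<forall>Y\<in>Lambda2. R X Y = \<mu> * bv_inner X Y)}"

definition lam_max :: "(bivec \<Rightarrow> bivec \<Rightarrow> real) \<Rightarrow> real" where
  "lam_max R = Max (eigvals R)"

definition lam_min :: "(bivec \<Rightarrow> bivec \<Rightarrow> real) \<Rightarrow> real" where
  "lam_min R = Min (eigvals R)"

definition oriented_orthonormal :: "(4 \<Rightarrow> vec4) \<Rightarrow> bool" where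
  "oriented_orthonormal e \<longleftrightarrow> (\<forall>i j. e i \<bullet> e j = (if i = j then 1 else 0)) \<and> det (\<chi> r. e r) > 0"

end

theory Submission
  imports Defs
begin


definition sel4 :: "4 \<Rightarrow> 4 \<Rightarrow> 4 \<Rightarrow> 4 \<Rightarrow> 4 \<Rightarrow> 4" where
  "sel4 i j k l r = (if r = 1 then i else if r = 2 then j else if r = 3 then k else l)"

lemma levi_sel: "levi i j k l = det (\<chi> r. std_e (sel4 i j k l r))"
  unfolding levi_def sel4_def by simp

lemma levi_perm:
  assumes "p permutes (UNIV::4 set)" "\<And>r. sel4 i' j' k' l' r = sel4 i j k l (p r)"
  shows "levi i' j' k' l' = of_int (sign p) * levi i j k l"
proof -
  have "(\<chi> r. std_e (sel4 i' j' k' l' r)) = (\<chi> r. (\<chi> r. std_e (sel4 i j k l r)) $ p r)"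
    using assms(2) by (simp add: vec_eq_iff)
  thus ?thesis unfolding levi_sel using det_permute_rows[OF assms(1), of "\<chi> r. std_e (sel4 i j k l r)"]
    by (simp only:)
qed

lemma ne4: "(1::4) \<noteq> 2" "(1::4) \<noteq> 3" "(1::4) \<noteq> 4" "(2::4) \<noteq> 3" "(2::4) \<noteq> 4" "(3::4) \<noteq> 4"
  by simp_all

lemma levi_sw12: "levi j i k l = - levi i j k l"
proof -
  have "levi j i k l = of_int (sign (Transposition.transpose (1::4) 2)) * levi i j k l"
    by (rule levi_perm) (auto simp: permutes_swap_id sel4_def Transposition.transpose_def)
  thus ?thesis by (simp add: sign_swap_id)
qed

lemma ex4E: "(r::4) \<noteq> 1 \<Longrightarrow> r \<noteq> 2 \<Longrightarrow> r \<noteq> 3 \<Longrightarrow> r \<noteq> 4 \<Longrightarrow> P"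
  using exhaust_4 by blast

lemma levi_sw23: "levi i k j l = - levi i j k l"
proof -
  have "levi i k j l = of_int (sign (Transposition.transpose (2::4) 3)) * levi i j k l"
    by (rule levi_perm) (auto simp: permutes_swap_id sel4_def Transposition.transpose_def)
  thus ?thesis by (simp add: sign_swap_id)
qed

lemma levi_sw34: "levi i j l k = - levi i j k l"
proof -
  have "levi i j l k = of_int (sign (Transposition.transpose (3::4) 4)) * levi i j k l"
    by (rule levi_perm) (auto simp: permutes_swap_id sel4_def Transposition.transpose_def elim: ex4E)
  thus ?thesis by (simp add: sign_swap_id)
qed

lemma levi_z12: "levi i i k l = 0"
  unfolding levi_sel by (rule det_identical_rows[of 1 2]) (simp_all add: row_def sel4_def)
lemma levi_z13: "levi i j i l = 0"
  unfolding levi_sel by (rule det_identical_rows[of 1 3]) (simp_all add: row_def sel4_def)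
lemma levi_z14: "levi i j k i = 0"
  unfolding levi_sel by (rule det_identical_rows[of 1 4]) (simp_all add: row_def sel4_def)
lemma levi_z23: "levi i j j l = 0"
  unfolding levi_sel by (rule det_identical_rows[of 2 3]) (simp_all add: row_def sel4_def)
lemma levi_z24: "levi i j k j = 0"
  unfolding levi_sel by (rule det_identical_rows[of 2 4]) (simp_all add: row_def sel4_def)
lemma levi_z34: "levi i j k k = 0"
  unfolding levi_sel by (rule det_identical_rows[of 3 4]) (simp_all add: row_def sel4_def)

lemma levi_1234: "levi 1 2 3 4 = 1"
proof -
  have "(\<chi> r. std_e (sel4 1 2 3 4 r)) = mat 1"
    by (simp add: vec_eq_iff forall_4 sel4_def std_e_def mat_def axis_def)
  thus ?thesis unfolding levi_sel by simp
qed
lemma levi_v1: "levi 1 2 3 4 = 1"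
  using  levi_1234 by simp
lemma levi_v2: "levi 1 2 4 3 = -1"
  using levi_sw34[of 1 2 3 4] levi_1234 by simp
lemma levi_v3: "levi 1 3 2 4 = -1"
  using levi_sw23[of 1 2 3 4] levi_1234 by simp
lemma levi_v4: "levi 1 3 4 2 = 1"
  using levi_sw34[of 1 3 2 4] levi_sw23[of 1 2 3 4] levi_1234 by simp
lemma levi_v5: "levi 1 4 2 3 = 1"
  using levi_sw23[of 1 2 4 3] levi_sw34[of 1 2 3 4] levi_1234 by simp
lemma levi_v6: "levi 1 4 3 2 = -1"
  using levi_sw23[of 1 3 4 2] levi_sw34[of 1 3 2 4] levi_sw23[of 1 2 3 4] levi_1234 by simp
lemma levi_v7: "levi 2 1 3 4 = -1"
  using levi_sw12[of 1 2 3 4] levi_1234 by simp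
lemma levi_v8: "levi 2 1 4 3 = 1"
  using levi_sw12[of 1 2 4 3] levi_sw34[of 1 2 3 4] levi_1234 by simp
lemma levi_v9: "levi 2 3 1 4 = 1"
  using levi_sw23[of 2 1 3 4] levi_sw12[of 1 2 3 4] levi_1234 by simp
lemma levi_v10: "levi 2 3 4 1 = -1"
  using levi_sw34[of 2 3 1 4] levi_sw23[of 2 1 3 4] levi_sw12[of 1 2 3 4] levi_1234 by simp
lemma levi_v11: "levi 2 4 1 3 = -1"
  using levi_sw23[of 2 1 4 3] levi_sw12[of 1 2 4 3] levi_sw34[of 1 2 3 4] levi_1234 by simp
lemma levi_v12: "levi 2 4 3 1 = 1"
  using levi_sw23[of 2 3 4 1] levi_sw34[of 2 3 1 4] levi_sw23[of 2 1 3 4] levi_sw12[of 1 2 3 4] levi_1234 by simp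
lemma levi_v13: "levi 3 1 2 4 = 1"
  using levi_sw12[of 1 3 2 4] levi_sw23[of 1 2 3 4] levi_1234 by simp
lemma levi_v14: "levi 3 1 4 2 = -1"
  using levi_sw12[of 1 3 4 2] levi_sw34[of 1 3 2 4] levi_sw23[of 1 2 3 4] levi_1234 by simp
lemma levi_v15: "levi 3 2 1 4 = -1"
  using levi_sw12[of 2 3 1 4] levi_sw23[of 2 1 3 4] levi_sw12[of 1 2 3 4] levi_1234 by simp
lemma levi_v16: "levi 3 2 4 1 = 1"
  using levi_sw12[of 2 3 4 1] levi_sw34[of 2 3 1 4] levi_sw23[of 2 1 3 4] levi_sw12[of 1 2 3 4] levi_1234 by simp
lemma levi_v17: "levi 3 4 1 2 = 1"
  using levi_sw23[of 3 1 4 2] levi_sw12[of 1 3 4 2] levi_sw34[of 1 3 2 4] levi_sw23[of 1 2 3 4] levi_1234 by simp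
lemma levi_v18: "levi 3 4 2 1 = -1"
  using levi_sw23[of 3 2 4 1] levi_sw12[of 2 3 4 1] levi_sw34[of 2 3 1 4] levi_sw23[of 2 1 3 4] levi_sw12[of 1 2 3 4] levi_1234 by simp
lemma levi_v19: "levi 4 1 2 3 = -1"
  using levi_sw12[of 1 4 2 3] levi_sw23[of 1 2 4 3] levi_sw34[of 1 2 3 4] levi_1234 by simp
lemma levi_v20: "levi 4 1 3 2 = 1"
  using levi_sw12[of 1 4 3 2] levi_sw23[of 1 3 4 2] levi_sw34[of 1 3 2 4] levi_sw23[of 1 2 3 4] levi_1234 by simp
lemma levi_v21: "levi 4 2 1 3 = 1"
  using levi_sw12[of 2 4 1 3] levi_sw23[of 2 1 4 3] levi_sw12[of 1 2 4 3] levi_sw34[of 1 2 3 4] levi_1234 by simp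
lemma levi_v22: "levi 4 2 3 1 = -1"
  using levi_sw12[of 2 4 3 1] levi_sw23[of 2 3 4 1] levi_sw34[of 2 3 1 4] levi_sw23[of 2 1 3 4] levi_sw12[of 1 2 3 4] levi_1234 by simp
lemma levi_v23: "levi 4 3 1 2 = -1"
  using levi_sw12[of 3 4 1 2] levi_sw23[of 3 1 4 2] levi_sw12[of 1 3 4 2] levi_sw34[of 1 3 2 4] levi_sw23[of 1 2 3 4] levi_1234 by simp
lemma levi_v24: "levi 4 3 2 1 = 1"
  using levi_sw12[of 3 4 2 1] levi_sw23[of 3 2 4 1] levi_sw12[of 2 3 4 1] levi_sw34[of 2 3 1 4] levi_sw23[of 2 1 3 4] levi_sw12[of 1 2 3 4] levi_1234 by simp

lemmas levi_vals = levi_v1 levi_v2 levi_v3 levi_v4 levi_v5 levi_v6 levi_v7 levi_v8 levi_v9 levi_v10 levi_v11 levi_v12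
  levi_v13 levi_v14 levi_v15 levi_v16 levi_v17 levi_v18 levi_v19 levi_v20 levi_v21 levi_v22 levi_v23 levi_v24
  levi_z12 levi_z13 levi_z14 levi_z23 levi_z24 levi_z34



lemma bv_inner_eq: "bv_inner A B = (1/2) * (A \<bullet> B)"
  unfolding bv_inner_def inner_vec_def by simp

lemma bv_sym: "bv_inner A B = bv_inner B A"
  unfolding bv_inner_eq by (simp add: inner_commute)
lemma bv_add_left: "bv_inner (A + B) C = bv_inner A C + bv_inner B C"
  unfolding bv_inner_eq by (simp add: inner_add_left algebra_simps)
lemma bv_add_right: "bv_inner C (A + B) = bv_inner C A + bv_inner C B"
  unfolding bv_inner_eq by (simp add: inner_add_right algebra_simps)
lemma bv_diff_left: "bv_inner (A - B) C = bv_inner A C - bv_inner B C"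
  unfolding bv_inner_eq by (simp add: inner_diff_left algebra_simps)
lemma bv_diff_right: "bv_inner C (A - B) = bv_inner C A - bv_inner C B"
  unfolding bv_inner_eq by (simp add: inner_diff_right algebra_simps)
lemma bv_scale_left: "bv_inner (c *\<^sub>R A) C = c * bv_inner A C"
  unfolding bv_inner_eq by simp
lemma bv_scale_right: "bv_inner C (c *\<^sub>R A) = c * bv_inner C A"
  unfolding bv_inner_eq by simp
lemma bv_sum_left: "bv_inner (\<Sum>i\<in>I. f i) C = (\<Sum>i\<in>I. bv_inner (f i) C)"
  unfolding bv_inner_eq by (simp add: inner_sum_left sum_distrib_left)
lemma bv_sum_right: "bv_inner C (\<Sum>i\<in>I. f i) = (\<Sum>i\<in>I. bv_inner C (f i))"
  unfolding bv_inner_eq by (simp add: inner_sum_right sum_distrib_left)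
lemma bv_neg_left: "bv_inner (- A) C = - bv_inner A C"
  unfolding bv_inner_eq by simp
lemma bv_neg_right: "bv_inner C (- A) = - bv_inner C A"
  unfolding bv_inner_eq by simp
lemma bv_zero: "bv_inner A A = 0 \<Longrightarrow> A = 0"
  unfolding bv_inner_eq by simp

lemmas bv_lin = bv_add_left bv_add_right bv_diff_left bv_diff_right bv_scale_left bv_scale_right
  bv_sum_left bv_sum_right bv_neg_left bv_neg_right

lemma change_basis_lin:
  fixes f :: "bivec \<Rightarrow> real" and u v :: "nat \<Rightarrow> bivec"
  assumes lf: "linear f"
   and vexp: "\<And>i. i\<in>I \<Longrightarrow> u i = (\<Sum>k\<in>J. bv_inner (u i) (v k) *\<^sub>R v k)"
   and uexp: "\<And>k. k\<in>J \<Longrightarrow> v k = (\<Sum>i\<in>I. bv_inner (v k) (u i) *\<^sub>R u i)"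
   and vorth: "\<And>k l. k\<in>J \<Longrightarrow> l\<in>J \<Longrightarrow> bv_inner (v k) (v l) = (if k = l then 1 else 0)"
   and fin: "finite J"
  shows "(\<Sum>i\<in>I. (f (u i))^2) = (\<Sum>k\<in>J. (f (v k))^2)"
proof -
  define c where "c i k = bv_inner (u i) (v k)" for i k
  have fu: "f (u i) = (\<Sum>k\<in>J. c i k * f (v k))" if "i \<in> I" for i
    apply (subst vexp[OF that])
    by (simp add: linear_sum[OF lf] linear_scale[OF lf] c_def)
  have G: "(\<Sum>i\<in>I. c i k * c i l) = (if k = l then 1 else 0)" if "k \<in> J" "l \<in> J" for k l
  proof -
    have "bv_inner (v k) (v l) = bv_inner (\<Sum>i\<in>I. bv_inner (v k) (u i) *\<^sub>R u i) (v l)"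
      using uexp[OF that(1)] by simp
    also have "\<dots> = (\<Sum>i\<in>I. c i k * c i l)"
      by (simp add: bv_lin c_def bv_sym)
    finally show ?thesis using vorth[OF that] by simp
  qed
  have "(\<Sum>i\<in>I. (f (u i))^2) = (\<Sum>i\<in>I. \<Sum>k\<in>J. \<Sum>l\<in>J. (c i k * f (v k)) * (c i l * f (v l)))"
    by (rule sum.cong) (simp_all add: fu power2_eq_square sum_product)
  also have "\<dots> = (\<Sum>k\<in>J. \<Sum>i\<in>I. \<Sum>l\<in>J. (c i k * f (v k)) * (c i l * f (v l)))"
    by (rule sum.swap)
  also have "\<dots> = (\<Sum>k\<in>J. \<Sum>l\<in>J. \<Sum>i\<in>I. (c i k * f (v k)) * (c i l * f (v l)))"
    by (rule sum.cong[OF refl], rule sum.swap)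
  also have "\<dots> = (\<Sum>k\<in>J. \<Sum>l\<in>J. f (v k) * f (v l) * (\<Sum>i\<in>I. c i k * c i l))"
    by (simp add: sum_distrib_left algebra_simps)
  also have "\<dots> = (\<Sum>k\<in>J. \<Sum>l\<in>J. f (v k) * f (v l) * (if k = l then 1 else 0))"
    by (intro sum.cong refl) (simp add: G)
  also have "\<dots> = (\<Sum>k\<in>J. (f (v k))^2)"
    using fin by (simp add: power2_eq_square if_distrib[of "\<lambda>x. _ * x"] sum.delta cong: if_cong)
  finally show ?thesis .
qed

lemma change_basis_bil:
  fixes S :: "bivec \<Rightarrow> bivec \<Rightarrow> real" and u v :: "nat \<Rightarrow> bivec"
  assumes bS: "bilinear S"
   and vexp: "\<And>i. i\<in>I \<Longrightarrow> u i = (\<Sum>k\<in>J. bv_inner (u i) (v k) *\<^sub>R v k)"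
   and uexp: "\<And>k. k\<in>J \<Longrightarrow> v k = (\<Sum>i\<in>I. bv_inner (v k) (u i) *\<^sub>R u i)"
   and vorth: "\<And>k l. k\<in>J \<Longrightarrow> l\<in>J \<Longrightarrow> bv_inner (v k) (v l) = (if k = l then 1 else 0)"
   and fin: "finite J"
  shows "(\<Sum>i\<in>I. \<Sum>j\<in>I. (S (u i) (u j))^2) = (\<Sum>k\<in>J. \<Sum>l\<in>J. (S (v k) (v l))^2)"
proof -
  have "(\<Sum>i\<in>I. \<Sum>j\<in>I. (S (u i) (u j))^2) = (\<Sum>i\<in>I. \<Sum>l\<in>J. (S (u i) (v l))^2)"
    apply (rule sum.cong[OF refl])
    apply (rule change_basis_lin[where f="\<lambda>y. S (u _) y"])
    using bS vexp uexp vorth fin by (auto simp: bilinear_def)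
  also have "\<dots> = (\<Sum>l\<in>J. \<Sum>i\<in>I. (S (u i) (v l))^2)"
    by (rule sum.swap)
  also have "\<dots> = (\<Sum>l\<in>J. \<Sum>k\<in>J. (S (v k) (v l))^2)"
    apply (rule sum.cong[OF refl])
    apply (rule change_basis_lin[where f="\<lambda>x. S x (v _)"])
    using bS vexp uexp vorth fin by (auto simp: bilinear_def)
  also have "\<dots> = (\<Sum>k\<in>J. \<Sum>l\<in>J. (S (v k) (v l))^2)"
    by (rule sum.swap)
  finally show ?thesis .
qed

lemma sum6: "(\<Sum>i\<in>{1..6::nat}. f i) = f 1 + f 2 + f 3 + f 4 + f 5 + f 6"
proof -
  have "{1..6::nat} = {1,2,3,4,5,6}" by auto
  thus ?thesis by (simp add: add.assoc)
qed

lemma wstd0: "wedge X Y $ a $ b = Y$a * X$b - X$a * Y$b"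
  unfolding wedge_def by simp
lemma axis1: "std_e i $ a = (if a = i then 1 else 0)"
  unfolding std_e_def axis_def by simp

definition bb :: "nat \<Rightarrow> bivec" where
  "bb p = (if p = 1 then wedge (std_e 1) (std_e 2) else if p = 2 then wedge (std_e 1) (std_e 3)
     else if p = 3 then wedge (std_e 1) (std_e 4) else if p = 4 then wedge (std_e 2) (std_e 3)
     else if p = 5 then wedge (std_e 2) (std_e 4) else wedge (std_e 3) (std_e 4))"

abbreviation xi :: "nat \<Rightarrow> bivec" where "xi \<equiv> Xi std_e"

lemma skewE: "A \<in> Lambda2 \<Longrightarrow> A $ i $ j = - A $ j $ i"
  unfolding Lambda2_def by (metis (mono_tags, lifting) mem_Collect_eq minus_minus transpose_def vec_lambda_beta vector_uminus_component)

lemma skew_facts: assumes "A \<in> Lambda2"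
  shows "A$1$1 = 0" "A$2$2 = 0" "A$3$3 = 0" "A$4$4 = 0"
   "A$2$1 = - A$1$2" "A$3$1 = - A$1$3" "A$4$1 = - A$1$4" "A$3$2 = - A$2$3" "A$4$2 = - A$2$4" "A$4$3 = - A$3$4"
  using skewE[OF assms, of 1 1] skewE[OF assms, of 2 2] skewE[OF assms, of 3 3] skewE[OF assms, of 4 4]
    skewE[OF assms, of 2 1] skewE[OF assms, of 3 1] skewE[OF assms, of 4 1] skewE[OF assms, of 3 2]
    skewE[OF assms, of 4 2] skewE[OF assms, of 4 3] by linarith+

lemma basis2_exp: assumes "A \<in> Lambda2" shows "A = (\<Sum>p\<in>{1..6}. bv_inner A (bb p) *\<^sub>R bb p)"
  using skew_facts[OF assms] unfolding sum6
  by (simp add: vec_eq_iff forall_4 bv_inner_def sum_4 bb_def wstd0 axis1)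

lemma xi_exp: assumes "A \<in> Lambda2" shows "A = (\<Sum>p\<in>{1..6}. bv_inner A (xi p) *\<^sub>R xi p)"
  using skew_facts[OF assms] unfolding sum6
  by (simp add: vec_eq_iff forall_4 bv_inner_def sum_4 Xi_def wstd0 axis1 field_simps)


lemma transpose_diff: "transpose (A - B) = transpose A - (transpose B :: 'a::ab_group_add^'n^'n)"
  by (simp add: vec_eq_iff transpose_def)
lemma transpose_add: "transpose (A + B) = transpose A + (transpose B :: 'a::ab_group_add^'n^'n)"
  by (simp add: vec_eq_iff transpose_def)
lemma transpose_neg: "transpose (- A) = - (transpose A :: 'a::ab_group_add^'n^'n)"
  by (simp add: vec_eq_iff transpose_def)
lemma transpose_zero: "transpose 0 = (0::'a::ab_group_add^'n^'n)"
  by (simp add: vec_eq_iff transpose_def)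
lemma transpose_sum: "transpose (\<Sum>i\<in>I. f i) = (\<Sum>i\<in>I. transpose (f i) :: 'a::ab_group_add^'n^'n)"
  by (induction I rule: infinite_finite_induct) (simp_all add: transpose_add transpose_zero)
lemma mm_neg_neg: "(- A) ** (- B) = (A ** B :: real^'n^'n)"
  by (simp add: vec_eq_iff matrix_matrix_mult_def sum_negf)

lemma L2_add: "A \<in> Lambda2 \<Longrightarrow> B \<in> Lambda2 \<Longrightarrow> A + B \<in> Lambda2"
  unfolding Lambda2_def by (simp add: transpose_add)
lemma L2_diff: "A \<in> Lambda2 \<Longrightarrow> B \<in> Lambda2 \<Longrightarrow> A - B \<in> Lambda2"
  unfolding Lambda2_def by (simp add: transpose_diff)
lemma L2_neg: "A \<in> Lambda2 \<Longrightarrow> - A \<in> Lambda2"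
  unfolding Lambda2_def by (simp add: transpose_neg)
lemma L2_scale: "A \<in> Lambda2 \<Longrightarrow> c *\<^sub>R A \<in> Lambda2"
  unfolding Lambda2_def by (simp add: transpose_scalar)
lemma L2_zero: "0 \<in> Lambda2"
  unfolding Lambda2_def by (simp add: vec_eq_iff transpose_def)
lemma L2_sum: "(\<And>i. i \<in> I \<Longrightarrow> f i \<in> Lambda2) \<Longrightarrow> (\<Sum>i\<in>I. f i) \<in> Lambda2"
  unfolding Lambda2_def by (simp add: transpose_sum sum_negf)
lemma L2_wedge: "wedge X Y \<in> Lambda2"
  unfolding Lambda2_def by (simp add: vec_eq_iff transpose_def wstd0)
lemma L2_act: "L \<in> Lambda2 \<Longrightarrow> A \<in> Lambda2 \<Longrightarrow> act L A \<in> Lambda2"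
  unfolding Lambda2_def act_def by (simp add: transpose_diff matrix_transpose_mul mm_neg_neg)
lemma L2_Xi: "Xi e a \<in> Lambda2"
  unfolding Xi_def by (intro L2_scale) (simp add: L2_add L2_diff L2_wedge)
lemma L2_bb: "bb p \<in> Lambda2"
  unfolding bb_def by (simp add: L2_wedge)

lemma in6: "p \<in> {1..6::nat} \<longleftrightarrow> p = 1 \<or> p = 2 \<or> p = 3 \<or> p = 4 \<or> p = 5 \<or> p = 6"
  by auto

lemma bb_orth: "p \<in> {1..6} \<Longrightarrow> q \<in> {1..6} \<Longrightarrow> bv_inner (bb p) (bb q) = (if p = q then 1 else 0)"
  unfolding in6 by (elim disjE) (simp_all add: bv_inner_def sum_4 bb_def wstd0 axis1)

lemma xi_orth: "p \<in> {1..6} \<Longrightarrow> q \<in> {1..6} \<Longrightarrow> bv_inner (xi p) (xi q) = (if p = q then 1 else 0)"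
  unfolding in6 by (elim disjE) (simp_all add: bv_inner_def sum_4 Xi_def wstd0 axis1 field_simps)


lemma mm_add_r: "(A + B) ** C = A ** C + B ** (C::real^'n^'n)"
  by (simp add: vec_eq_iff matrix_matrix_mult_def sum.distrib algebra_simps)
lemma mm_diff_r: "(A - B) ** C = A ** C - B ** (C::real^'n^'n)"
  by (simp add: vec_eq_iff matrix_matrix_mult_def sum_subtractf algebra_simps)
lemma mm_diff_l: "C ** (A - B) = C ** A - C ** (B::real^'n^'n)"
  by (simp add: vec_eq_iff matrix_matrix_mult_def sum_subtractf algebra_simps)
lemma mm_scale_l: "(c *\<^sub>R A) ** B = c *\<^sub>R (A ** (B::real^'n^'n))"
  by (simp add: vec_eq_iff matrix_matrix_mult_def sum_distrib_left algebra_simps)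
lemma mm_scale_r: "A ** (c *\<^sub>R B) = c *\<^sub>R (A ** (B::real^'n^'n))"
  by (simp add: vec_eq_iff matrix_matrix_mult_def sum_distrib_left algebra_simps)

lemma act_add_left: "act (A + B) C = act A C + act B C"
  unfolding act_def by (simp add: mm_add_r matrix_add_ldistrib algebra_simps)
lemma act_add_right: "act C (A + B) = act C A + act C B"
  unfolding act_def by (simp add: mm_add_r matrix_add_ldistrib algebra_simps)
lemma act_scale_left: "act (c *\<^sub>R A) C = c *\<^sub>R act A C"
  unfolding act_def by (simp add: mm_scale_l mm_scale_r algebra_simps)
lemma act_scale_right: "act C (c *\<^sub>R A) = c *\<^sub>R act C A"
  unfolding act_def by (simp add: mm_scale_l mm_scale_r algebra_simps)
lemma act_zero_left: "act 0 C = 0" unfolding act_def by simp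
lemma act_zero_right: "act C 0 = 0" unfolding act_def by simp
lemma act_sum_left: "act (\<Sum>i\<in>I. f i) C = (\<Sum>i\<in>I. act (f i) C)"
  by (induction I rule: infinite_finite_induct) (simp_all add: act_add_left act_zero_left)
lemma act_sum_right: "act C (\<Sum>i\<in>I. f i) = (\<Sum>i\<in>I. act C (f i))"
  by (induction I rule: infinite_finite_induct) (simp_all add: act_add_right act_zero_right)

lemma linear_act: "linear (act L)"
  by (rule linearI) (simp_all add: act_add_right act_scale_right)

lemma bil_form_act: assumes "bilinear R" shows "bilinear (form_act L R)"
proof -
  have l1: "linear (\<lambda>y. R x y)" and l2: "linear (\<lambda>x. R x y)" for x y
    using assms unfolding bilinear_def by auto
  show ?thesis unfolding bilinear_def form_act_def
  proof (intro conjI allI)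
    fix x show "linear (\<lambda>y. - R (act L x) y - R x (act L y))"
      by (intro linear_compose_sub linear_compose_neg l1 linear_compose[OF linear_act l1, unfolded o_def])
  next
    fix y show "linear (\<lambda>x. - R (act L x) y - R x (act L y))"
      by (intro linear_compose_sub linear_compose_neg l2 linear_compose[OF linear_act l2, unfolded o_def])
  qed
qed


lemma normsq_basis2: "form_normsq basis2 S = (\<Sum>p\<in>{1..6}. \<Sum>q\<in>{1..6}. (S (bb p) (bb q))^2)"
  unfolding form_normsq_def basis2_def sum6 bb_def by simp

lemma normsq_xi: "bilinear S \<Longrightarrow> form_normsq basis2 S = (\<Sum>p\<in>{1..6}. \<Sum>q\<in>{1..6}. (S (xi p) (xi q))^2)"
  unfolding normsq_basis2
  apply (rule change_basis_bil[where u=bb and v=xi])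
      apply assumption
     apply (rule xi_exp[OF L2_bb])
    apply (rule basis2_exp[OF L2_Xi])
   apply (rule xi_orth; assumption)
  by simp

lemma wedge_self: "wedge X X = 0"
  by (simp add: vec_eq_iff wstd0)
lemma wedge_anti: "wedge Y X = - wedge X Y"
  by (simp add: vec_eq_iff wstd0)

lemma einstein_block:
  assumes S: "SymB R" and E: "Einstein R"
  shows "\<And>a b. a \<in> {1,2,3} \<Longrightarrow> b \<in> {4,5,6} \<Longrightarrow> R (xi a) (xi b) = 0"
proof -
  from E obtain c where c: "\<And>Y W. Ric R Y W = c * (Y \<bullet> W)" unfolding Einstein_def by blast
  have bil: "bilinear R" and sym: "\<And>A B. R A B = R B A" using S unfolding SymB_def by auto
  let ?w = "\<lambda>i j. wedge (std_e i) (std_e j)"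
  have anti: "?w 2 1 = - ?w 1 2" "?w 3 1 = - ?w 1 3" "?w 4 1 = - ?w 1 4" "?w 3 2 = - ?w 2 3"
     "?w 4 2 = - ?w 2 4" "?w 4 3 = - ?w 3 4" by (rule wedge_anti)+
  have self: "?w i i = 0" for i by (simp add: wedge_self)
  note rs = bilinear_ladd[OF bil] bilinear_radd[OF bil] bilinear_lsub[OF bil] bilinear_rsub[OF bil]
    bilinear_lmul[OF bil] bilinear_rmul[OF bil] bilinear_lneg[OF bil] bilinear_rneg[OF bil]
    bilinear_lzero[OF bil] bilinear_rzero[OF bil]
  have ip: "std_e i \<bullet> std_e j = (if i = j then 1 else 0)" for i j
    by (simp add: std_e_def inner_axis_axis)
  have ric: "Ric R (std_e i) (std_e j) = c * (if i = j then 1 else 0)" for i j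
    using c[of "std_e i" "std_e j"] ip by simp
  note ricd = ric[unfolded Ric_def Rm_def sum_4]
  have r11: "R (?w 1 2) (?w 1 2) + R (?w 1 3) (?w 1 3) + R (?w 1 4) (?w 1 4) = c"
    using ricd[of 1 1] by (simp add: anti self rs)
  have r22: "R (?w 1 2) (?w 1 2) + R (?w 2 3) (?w 2 3) + R (?w 2 4) (?w 2 4) = c"
    using ricd[of 2 2] by (simp add: anti self rs)
  have r33: "R (?w 1 3) (?w 1 3) + R (?w 2 3) (?w 2 3) + R (?w 3 4) (?w 3 4) = c"
    using ricd[of 3 3] by (simp add: anti self rs)
  have r44: "R (?w 1 4) (?w 1 4) + R (?w 2 4) (?w 2 4) + R (?w 3 4) (?w 3 4) = c"
    using ricd[of 4 4] by (simp add: anti self rs)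
  have r12: "R (?w 1 3) (?w 2 3) + R (?w 1 4) (?w 2 4) = 0"
    using ricd[of 1 2] by (simp add: anti self rs)
  have r13: "- R (?w 1 2) (?w 2 3) + R (?w 1 4) (?w 3 4) = 0"
    using ricd[of 1 3] by (simp add: anti self rs)
  have r14: "R (?w 1 2) (?w 2 4) + R (?w 1 3) (?w 3 4) = 0"
    using ricd[of 1 4] by (simp add: anti self rs)
  have r23: "R (?w 1 2) (?w 1 3) + R (?w 2 4) (?w 3 4) = 0"
    using ricd[of 2 3] by (simp add: anti self rs)
  have r24: "R (?w 1 2) (?w 1 4) - R (?w 2 3) (?w 3 4) = 0"
    using ricd[of 2 4] by (simp add: anti self rs)
  have r34: "R (?w 1 3) (?w 1 4) + R (?w 2 3) (?w 2 4) = 0"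
    using ricd[of 3 4] by (simp add: anti self rs)
  note ws = sym[of "?w 1 2" "?w 1 3"] sym[of "?w 1 2" "?w 1 4"] sym[of "?w 1 2" "?w 2 3"] sym[of "?w 1 2" "?w 2 4"] sym[of "?w 1 2" "?w 3 4"] sym[of "?w 1 3" "?w 1 4"] sym[of "?w 1 3" "?w 2 3"] sym[of "?w 1 3" "?w 2 4"] sym[of "?w 1 3" "?w 3 4"] sym[of "?w 1 4" "?w 2 3"] sym[of "?w 1 4" "?w 2 4"] sym[of "?w 1 4" "?w 3 4"] sym[of "?w 2 3" "?w 2 4"] sym[of "?w 2 3" "?w 3 4"] sym[of "?w 2 4" "?w 3 4"]
  fix a b :: nat assume a: "a \<in> {1,2,3}" and b: "b \<in> {4,5,6}"
  from a b have "a = 1 \<or> a = 2 \<or> a = 3" "b = 4 \<or> b = 5 \<or> b = 6" by auto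
  then show "R (xi a) (xi b) = 0"
    apply (elim disjE)
    apply (simp_all add: Xi_def rs divide_simps)
    by (use r11 r22 r33 r44 r12 r13 r14 r23 r24 r34 ws in linarith)+
qed

lemma actP: assumes "L \<in> Lambda2" "a \<in> {1,2,3}" shows "act L (xi a) = act (projP L) (xi a)"
proof -
  from assms(2) have "a = 1 \<or> a = 2 \<or> a = 3" by auto
  then show ?thesis using skew_facts[OF assms(1)]
    by (elim disjE) (simp_all add: vec_eq_iff forall_4 act_def matrix_matrix_mult_def sum_4 projP_def hodge_def levi_vals Xi_def wstd0 axis1 algebra_simps)
qed

lemma orthPM: assumes "L \<in> Lambda2" "a \<in> {1,2,3}" "b \<in> {4,5,6}"
  shows "bv_inner (act L (xi a)) (xi b) = 0"
proof -
  from assms(2,3) have "a = 1 \<or> a = 2 \<or> a = 3" "b = 4 \<or> b = 5 \<or> b = 6" by auto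
  then show ?thesis using skew_facts[OF assms(1)]
    by (elim disjE) (simp_all add: bv_inner_def act_def matrix_matrix_mult_def sum_4 Xi_def wstd0 axis1 algebra_simps)
qed

lemma actM: assumes "L \<in> Lambda2" "a \<in> {4,5,6}" shows "act L (xi a) = act (projM L) (xi a)"
proof -
  from assms(2) have "a = 4 \<or> a = 5 \<or> a = 6" by auto
  then show ?thesis using skew_facts[OF assms(1)]
    by (elim disjE) (simp_all add: vec_eq_iff forall_4 act_def matrix_matrix_mult_def sum_4 projM_def hodge_def levi_vals Xi_def wstd0 axis1 algebra_simps)
qed

lemma orthMP: assumes "L \<in> Lambda2" "a \<in> {4,5,6}" "b \<in> {1,2,3}"
  shows "bv_inner (act L (xi a)) (xi b) = 0"
proof -
  from assms(2,3) have "a = 4 \<or> a = 5 \<or> a = 6" "b = 1 \<or> b = 2 \<or> b = 3" by auto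
  then show ?thesis using skew_facts[OF assms(1)]
    by (elim disjE) (simp_all add: bv_inner_def act_def matrix_matrix_mult_def sum_4 Xi_def wstd0 axis1 algebra_simps)
qed

lemma R_sum_left: assumes "bilinear R" shows "R (\<Sum>i\<in>I. c i *\<^sub>R x i) Y = (\<Sum>i\<in>I. c i * R (x i) Y)"
  by (induction I rule: infinite_finite_induct)
     (simp_all add: bilinear_ladd[OF assms] bilinear_lmul[OF assms] bilinear_lzero[OF assms])
lemma R_sum_right: assumes "bilinear R" shows "R Y (\<Sum>i\<in>I. c i *\<^sub>R x i) = (\<Sum>i\<in>I. c i * R Y (x i))"
  by (induction I rule: infinite_finite_induct)
     (simp_all add: bilinear_radd[OF assms] bilinear_rmul[OF assms] bilinear_rzero[OF assms])

lemma R_exp_left: assumes "bilinear R" "X \<in> Lambda2"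
  shows "R X Y = (\<Sum>g\<in>{1..6}. bv_inner X (xi g) * R (xi g) Y)"
proof -
  have l: "linear (\<lambda>x. R x Y)" using assms(1) unfolding bilinear_def by auto
  have "R X Y = R (\<Sum>g\<in>{1..6}. bv_inner X (xi g) *\<^sub>R xi g) Y"
    using xi_exp[OF assms(2)] by simp
  also have "\<dots> = (\<Sum>g\<in>{1..6}. bv_inner X (xi g) * R (xi g) Y)"
    by (rule R_sum_left[OF assms(1)])
  finally show ?thesis .
qed

lemma R_exp_right: assumes "bilinear R" "X \<in> Lambda2"
  shows "R Y X = (\<Sum>g\<in>{1..6}. bv_inner X (xi g) * R Y (xi g))"
proof -
  have l: "linear (\<lambda>x. R Y x)" using assms(1) unfolding bilinear_def by auto
  have "R Y X = R Y (\<Sum>g\<in>{1..6}. bv_inner X (xi g) *\<^sub>R xi g)"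
    using xi_exp[OF assms(2)] by simp
  also have "\<dots> = (\<Sum>g\<in>{1..6}. bv_inner X (xi g) * R Y (xi g))"
    by (rule R_sum_right[OF assms(1)])
  finally show ?thesis .
qed

lemma cross_zero:
  assumes S: "SymB R" and E: "Einstein R" and L: "L \<in> Lambda2"
    and ab: "a \<in> {1,2,3}" "b \<in> {4,5,6}"
  shows "form_act L R (xi a) (xi b) = 0" "form_act L R (xi b) (xi a) = 0"
proof -
  have bil: "bilinear R" and sym: "\<And>A B. R A B = R B A" using S unfolding SymB_def by auto
  have blk1: "R (xi p) (xi q) = 0" if "p \<in> {1,2,3}" "q \<in> {4,5,6}" for p q
    using einstein_block[OF S E that] .
  have blk2: "R (xi q) (xi p) = 0" if "p \<in> {1,2,3}" "q \<in> {4,5,6}" for p q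
    using einstein_block[OF S E that] sym by metis
  have o1: "bv_inner (act L (xi p)) (xi q) = 0" if "p \<in> {1,2,3}" "q \<in> {4,5,6}" for p q
    using orthPM[OF L that] .
  have o2: "bv_inner (act L (xi q)) (xi p) = 0" if "p \<in> {1,2,3}" "q \<in> {4,5,6}" for p q
    using orthMP[OF L that(2,1)] .
  have LA: "act L (xi p) \<in> Lambda2" for p by (rule L2_act[OF L L2_Xi])
  show "form_act L R (xi a) (xi b) = 0"
    unfolding form_act_def R_exp_left[OF bil LA] R_exp_right[OF bil LA] sum6
    using ab by (auto simp: blk1 blk2 o1 o2)
  show "form_act L R (xi b) (xi a) = 0"
    unfolding form_act_def R_exp_left[OF bil LA] R_exp_right[OF bil LA] sum6
    using ab by (auto simp: blk1 blk2 o1 o2)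
qed

lemma part1:
  assumes S: "SymB R" and E: "Einstein R" and L: "L \<in> Lambda2"
  shows "form_normsq basis2 (form_act L R) =
            form_normsq basisP (form_act (projP L) R) + form_normsq basisM (form_act (projM L) R)"
proof -
  have bil: "bilinear R" using S unfolding SymB_def by auto
  have PP: "form_act L R (xi a) (xi b) = form_act (projP L) R (xi a) (xi b)" if "a \<in> {1,2,3}" "b \<in> {1,2,3}" for a b
    unfolding form_act_def using actP[OF L that(1)] actP[OF L that(2)] by simp
  have MM: "form_act L R (xi a) (xi b) = form_act (projM L) R (xi a) (xi b)" if "a \<in> {4,5,6}" "b \<in> {4,5,6}" for a b
    unfolding form_act_def using actM[OF L that(1)] actM[OF L that(2)] by simp
  have PM: "form_act L R (xi a) (xi b) = 0" if "a \<in> {1,2,3}" "b \<in> {4,5,6}" for a b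
    using cross_zero[OF S E L that] by simp
  have MP: "form_act L R (xi b) (xi a) = 0" if "a \<in> {1,2,3}" "b \<in> {4,5,6}" for a b
    using cross_zero[OF S E L that] by simp
  show ?thesis
    unfolding normsq_xi[OF bil_form_act[OF bil]] sum6
    unfolding form_normsq_def basisP_def basisM_def
    by (simp add: PP MM PM MP)
qed


definition Emat :: "(4 \<Rightarrow> vec4) \<Rightarrow> real^4^4" where "Emat e = (\<chi> r. e r)"
definition Phi :: "(4 \<Rightarrow> vec4) \<Rightarrow> bivec \<Rightarrow> bivec" where
  "Phi e A = transpose (Emat e) ** A ** Emat e"
definition Psi :: "(4 \<Rightarrow> vec4) \<Rightarrow> bivec \<Rightarrow> bivec" where
  "Psi e A = Emat e ** A ** transpose (Emat e)"

lemma Phi_wedge: "Phi e (wedge X Y) = wedge (transpose (Emat e) *v X) (transpose (Emat e) *v Y)"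
  by (simp add: Phi_def vec_eq_iff matrix_matrix_mult_def transpose_def wstd0 matrix_vector_mult_def sum_4 algebra_simps)

lemma Et_std: "transpose (Emat e) *v std_e k = e k"
  using exhaust_4[of k] by (auto simp add: vec_eq_iff Emat_def transpose_def matrix_vector_mult_def sum_4 axis1)

lemma Phi_adj: "bv_inner (Phi e A) B = bv_inner A (Psi e B)"
  by (simp add: Phi_def Psi_def bv_inner_def matrix_matrix_mult_def transpose_def sum_4 algebra_simps)

lemma Emat_orth: assumes "oriented_orthonormal e"
  shows "Emat e ** transpose (Emat e) = mat 1" "transpose (Emat e) ** Emat e = mat 1"
proof -
  have o: "e i \<bullet> e j = (if i = j then 1 else 0)" for i j using assms unfolding oriented_orthonormal_def by auto
  show 1: "Emat e ** transpose (Emat e) = mat 1"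
    using o by (simp add: vec_eq_iff Emat_def transpose_def matrix_matrix_mult_def mat_def inner_vec_def)
  show "transpose (Emat e) ** Emat e = mat 1"
    using 1 matrix_left_right_inverse by blast
qed

lemma Phi_add: "Phi e (A + B) = Phi e A + Phi e B"
  unfolding Phi_def by (simp add: matrix_add_ldistrib mm_add_r)
lemma Phi_diff: "Phi e (A - B) = Phi e A - Phi e B"
  unfolding Phi_def by (simp add: mm_diff_l mm_diff_r)
lemma Phi_scale: "Phi e (c *\<^sub>R A) = c *\<^sub>R Phi e A"
  unfolding Phi_def by (simp add: mm_scale_l mm_scale_r)
lemma Phi_zero: "Phi e 0 = 0"
  unfolding Phi_def by simp
lemma Phi_sum: "Phi e (\<Sum>i\<in>I. f i) = (\<Sum>i\<in>I. Phi e (f i))"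
  by (induction I rule: infinite_finite_induct) (simp_all add: Phi_add Phi_zero)

lemma Phi_wedge_std: "Phi e (wedge (std_e k) (std_e l)) = wedge (e k) (e l)"
  by (simp only: Phi_wedge Et_std)

lemma Phi_xi: "Phi e (xi a) = Xi e a"
  unfolding Xi_def by (simp add: Phi_scale Phi_add Phi_diff Phi_wedge_std)

lemma Psi_Phi: assumes "oriented_orthonormal e" shows "Psi e (Phi e A) = A"
proof -
  have "Psi e (Phi e A) = (Emat e ** transpose (Emat e)) ** A ** (Emat e ** transpose (Emat e))"
    unfolding Psi_def Phi_def by (simp add: matrix_mul_assoc)
  thus ?thesis using Emat_orth[OF assms] by simp
qed
lemma Phi_Psi: assumes "oriented_orthonormal e" shows "Phi e (Psi e A) = A"
proof -
  have "Phi e (Psi e A) = (transpose (Emat e) ** Emat e) ** A ** (transpose (Emat e) ** Emat e)"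
    unfolding Psi_def Phi_def by (simp add: matrix_mul_assoc)
  thus ?thesis using Emat_orth[OF assms] by simp
qed

lemma Phi_inner: assumes "oriented_orthonormal e" shows "bv_inner (Phi e A) (Phi e B) = bv_inner A B"
  by (simp add: Phi_adj Psi_Phi[OF assms])

lemma Phi_act: assumes "oriented_orthonormal e" shows "act (Phi e A) (Phi e B) = Phi e (act A B)"
proof -
  have I: "Emat e ** transpose (Emat e) = mat 1" using Emat_orth[OF assms] by simp
  have key: "Phi e A ** Phi e B = Phi e (A ** B)" for A B
  proof -
    have "Phi e A ** Phi e B = transpose (Emat e) ** A ** (Emat e ** transpose (Emat e)) ** B ** Emat e"
      unfolding Phi_def by (simp add: matrix_mul_assoc)
    also have "\<dots> = Phi e (A ** B)" unfolding Phi_def I by (simp add: matrix_mul_assoc)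
    finally show ?thesis .
  qed
  show ?thesis unfolding act_def by (simp add: key Phi_diff)
qed

lemma mm_neg_l: "(- A) ** B = - (A ** (B::real^'n^'n))"
  by (simp add: vec_eq_iff matrix_matrix_mult_def sum_negf)
lemma mm_neg_r: "A ** (- B) = - (A ** (B::real^'n^'n))"
  by (simp add: vec_eq_iff matrix_matrix_mult_def sum_negf)

lemma Psi_L2: assumes "A \<in> Lambda2" shows "Psi e A \<in> Lambda2"
proof -
  have tA: "transpose A = - A" using assms unfolding Lambda2_def by simp
  show ?thesis unfolding Lambda2_def Psi_def
    by (simp add: matrix_transpose_mul tA mm_neg_l mm_neg_r matrix_mul_assoc)
qed

lemma Xe_exp: assumes "oriented_orthonormal e" "A \<in> Lambda2"
  shows "A = (\<Sum>p\<in>{1..6}. bv_inner A (Xi e p) *\<^sub>R Xi e p)"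
proof -
  have "A = Phi e (Psi e A)" using Phi_Psi[OF assms(1)] by simp
  also have "\<dots> = Phi e (\<Sum>p\<in>{1..6}. bv_inner (Psi e A) (xi p) *\<^sub>R xi p)"
    using xi_exp[OF Psi_L2[OF assms(2)]] by simp
  also have "\<dots> = (\<Sum>p\<in>{1..6}. bv_inner A (Xi e p) *\<^sub>R Xi e p)"
  proof -
    have "bv_inner (Psi e A) (xi p) = bv_inner A (Xi e p)" for p
      using Phi_adj[of e "xi p" A] Phi_xi[of e p] bv_sym by metis
    then show ?thesis by (simp add: Phi_sum Phi_scale Phi_xi)
  qed
  finally show ?thesis .
qed

lemma Xe_orth: assumes "oriented_orthonormal e" "p \<in> {1..6}" "q \<in> {1..6}"
  shows "bv_inner (Xi e p) (Xi e q) = (if p = q then 1 else 0)"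
  using Phi_inner[OF assms(1), of "xi p" "xi q"] xi_orth[OF assms(2,3)] by (simp add: Phi_xi)

lemma ac_1_1: "act (xi 1) (xi 1) = 0"
  by (simp add: vec_eq_iff forall_4 act_def matrix_matrix_mult_def sum_4 Xi_def wstd0 axis1)
lemma ac_1_2: "act (xi 1) (xi 2) = sqrt 2 *\<^sub>R xi 3"
  by (simp add: vec_eq_iff forall_4 act_def matrix_matrix_mult_def sum_4 Xi_def wstd0 axis1)
lemma ac_1_3: "act (xi 1) (xi 3) = (- sqrt 2) *\<^sub>R xi 2"
  by (simp add: vec_eq_iff forall_4 act_def matrix_matrix_mult_def sum_4 Xi_def wstd0 axis1)
lemma ac_1_4: "act (xi 1) (xi 4) = 0"
  by (simp add: vec_eq_iff forall_4 act_def matrix_matrix_mult_def sum_4 Xi_def wstd0 axis1)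
lemma ac_1_5: "act (xi 1) (xi 5) = 0"
  by (simp add: vec_eq_iff forall_4 act_def matrix_matrix_mult_def sum_4 Xi_def wstd0 axis1)
lemma ac_1_6: "act (xi 1) (xi 6) = 0"
  by (simp add: vec_eq_iff forall_4 act_def matrix_matrix_mult_def sum_4 Xi_def wstd0 axis1)
lemma ac_2_1: "act (xi 2) (xi 1) = (- sqrt 2) *\<^sub>R xi 3"
  by (simp add: vec_eq_iff forall_4 act_def matrix_matrix_mult_def sum_4 Xi_def wstd0 axis1)
lemma ac_2_2: "act (xi 2) (xi 2) = 0"
  by (simp add: vec_eq_iff forall_4 act_def matrix_matrix_mult_def sum_4 Xi_def wstd0 axis1)
lemma ac_2_3: "act (xi 2) (xi 3) = sqrt 2 *\<^sub>R xi 1"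
  by (simp add: vec_eq_iff forall_4 act_def matrix_matrix_mult_def sum_4 Xi_def wstd0 axis1)
lemma ac_2_4: "act (xi 2) (xi 4) = 0"
  by (simp add: vec_eq_iff forall_4 act_def matrix_matrix_mult_def sum_4 Xi_def wstd0 axis1)
lemma ac_2_5: "act (xi 2) (xi 5) = 0"
  by (simp add: vec_eq_iff forall_4 act_def matrix_matrix_mult_def sum_4 Xi_def wstd0 axis1)
lemma ac_2_6: "act (xi 2) (xi 6) = 0"
  by (simp add: vec_eq_iff forall_4 act_def matrix_matrix_mult_def sum_4 Xi_def wstd0 axis1)
lemma ac_3_1: "act (xi 3) (xi 1) = sqrt 2 *\<^sub>R xi 2"
  by (simp add: vec_eq_iff forall_4 act_def matrix_matrix_mult_def sum_4 Xi_def wstd0 axis1)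
lemma ac_3_2: "act (xi 3) (xi 2) = (- sqrt 2) *\<^sub>R xi 1"
  by (simp add: vec_eq_iff forall_4 act_def matrix_matrix_mult_def sum_4 Xi_def wstd0 axis1)
lemma ac_3_3: "act (xi 3) (xi 3) = 0"
  by (simp add: vec_eq_iff forall_4 act_def matrix_matrix_mult_def sum_4 Xi_def wstd0 axis1)
lemma ac_3_4: "act (xi 3) (xi 4) = 0"
  by (simp add: vec_eq_iff forall_4 act_def matrix_matrix_mult_def sum_4 Xi_def wstd0 axis1)
lemma ac_3_5: "act (xi 3) (xi 5) = 0"
  by (simp add: vec_eq_iff forall_4 act_def matrix_matrix_mult_def sum_4 Xi_def wstd0 axis1)
lemma ac_3_6: "act (xi 3) (xi 6) = 0"
  by (simp add: vec_eq_iff forall_4 act_def matrix_matrix_mult_def sum_4 Xi_def wstd0 axis1)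
lemma ac_4_1: "act (xi 4) (xi 1) = 0"
  by (simp add: vec_eq_iff forall_4 act_def matrix_matrix_mult_def sum_4 Xi_def wstd0 axis1)
lemma ac_4_2: "act (xi 4) (xi 2) = 0"
  by (simp add: vec_eq_iff forall_4 act_def matrix_matrix_mult_def sum_4 Xi_def wstd0 axis1)
lemma ac_4_3: "act (xi 4) (xi 3) = 0"
  by (simp add: vec_eq_iff forall_4 act_def matrix_matrix_mult_def sum_4 Xi_def wstd0 axis1)
lemma ac_4_4: "act (xi 4) (xi 4) = 0"
  by (simp add: vec_eq_iff forall_4 act_def matrix_matrix_mult_def sum_4 Xi_def wstd0 axis1)
lemma ac_4_5: "act (xi 4) (xi 5) = (- sqrt 2) *\<^sub>R xi 6"
  by (simp add: vec_eq_iff forall_4 act_def matrix_matrix_mult_def sum_4 Xi_def wstd0 axis1)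
lemma ac_4_6: "act (xi 4) (xi 6) = sqrt 2 *\<^sub>R xi 5"
  by (simp add: vec_eq_iff forall_4 act_def matrix_matrix_mult_def sum_4 Xi_def wstd0 axis1)
lemma ac_5_1: "act (xi 5) (xi 1) = 0"
  by (simp add: vec_eq_iff forall_4 act_def matrix_matrix_mult_def sum_4 Xi_def wstd0 axis1)
lemma ac_5_2: "act (xi 5) (xi 2) = 0"
  by (simp add: vec_eq_iff forall_4 act_def matrix_matrix_mult_def sum_4 Xi_def wstd0 axis1)
lemma ac_5_3: "act (xi 5) (xi 3) = 0"
  by (simp add: vec_eq_iff forall_4 act_def matrix_matrix_mult_def sum_4 Xi_def wstd0 axis1)
lemma ac_5_4: "act (xi 5) (xi 4) = sqrt 2 *\<^sub>R xi 6"
  by (simp add: vec_eq_iff forall_4 act_def matrix_matrix_mult_def sum_4 Xi_def wstd0 axis1)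
lemma ac_5_5: "act (xi 5) (xi 5) = 0"
  by (simp add: vec_eq_iff forall_4 act_def matrix_matrix_mult_def sum_4 Xi_def wstd0 axis1)
lemma ac_5_6: "act (xi 5) (xi 6) = (- sqrt 2) *\<^sub>R xi 4"
  by (simp add: vec_eq_iff forall_4 act_def matrix_matrix_mult_def sum_4 Xi_def wstd0 axis1)
lemma ac_6_1: "act (xi 6) (xi 1) = 0"
  by (simp add: vec_eq_iff forall_4 act_def matrix_matrix_mult_def sum_4 Xi_def wstd0 axis1)
lemma ac_6_2: "act (xi 6) (xi 2) = 0"
  by (simp add: vec_eq_iff forall_4 act_def matrix_matrix_mult_def sum_4 Xi_def wstd0 axis1)
lemma ac_6_3: "act (xi 6) (xi 3) = 0"
  by (simp add: vec_eq_iff forall_4 act_def matrix_matrix_mult_def sum_4 Xi_def wstd0 axis1)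
lemma ac_6_4: "act (xi 6) (xi 4) = (- sqrt 2) *\<^sub>R xi 5"
  by (simp add: vec_eq_iff forall_4 act_def matrix_matrix_mult_def sum_4 Xi_def wstd0 axis1)
lemma ac_6_5: "act (xi 6) (xi 5) = sqrt 2 *\<^sub>R xi 4"
  by (simp add: vec_eq_iff forall_4 act_def matrix_matrix_mult_def sum_4 Xi_def wstd0 axis1)
lemma ac_6_6: "act (xi 6) (xi 6) = 0"
  by (simp add: vec_eq_iff forall_4 act_def matrix_matrix_mult_def sum_4 Xi_def wstd0 axis1)
lemmas ac_table = ac_1_1 ac_1_2 ac_1_3 ac_1_4 ac_1_5 ac_1_6 ac_2_1 ac_2_2 ac_2_3 ac_2_4 ac_2_5 ac_2_6 ac_3_1 ac_3_2 ac_3_3 ac_3_4 ac_3_5 ac_3_6 ac_4_1 ac_4_2 ac_4_3 ac_4_4 ac_4_5 ac_4_6 ac_5_1 ac_5_2 ac_5_3 ac_5_4 ac_5_5 ac_5_6 ac_6_1 ac_6_2 ac_6_3 ac_6_4 ac_6_5 ac_6_6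
lemma Tv_1_1: "bv_inner (xi 1) (act (\<Sum>g\<in>{1..6}. a g *\<^sub>R xi g) (xi 1)) = 0"
  unfolding act_sum_left bv_sum_right sum6 by (simp add: act_add_left bv_add_right act_scale_left bv_scale_right ac_table bv_scale_right bv_neg_right bv_diff_right xi_orth del: One_nat_def)
lemma Tv_1_2: "bv_inner (xi 1) (act (\<Sum>g\<in>{1..6}. a g *\<^sub>R xi g) (xi 2)) = - (sqrt 2 * a 3)"
  unfolding act_sum_left bv_sum_right sum6 by (simp add: act_add_left bv_add_right act_scale_left bv_scale_right ac_table bv_scale_right bv_neg_right bv_diff_right xi_orth del: One_nat_def)
lemma Tv_1_3: "bv_inner (xi 1) (act (\<Sum>g\<in>{1..6}. a g *\<^sub>R xi g) (xi 3)) = sqrt 2 * a 2"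
  unfolding act_sum_left bv_sum_right sum6 by (simp add: act_add_left bv_add_right act_scale_left bv_scale_right ac_table bv_scale_right bv_neg_right bv_diff_right xi_orth del: One_nat_def)
lemma Tv_1_4: "bv_inner (xi 1) (act (\<Sum>g\<in>{1..6}. a g *\<^sub>R xi g) (xi 4)) = 0"
  unfolding act_sum_left bv_sum_right sum6 by (simp add: act_add_left bv_add_right act_scale_left bv_scale_right ac_table bv_scale_right bv_neg_right bv_diff_right xi_orth del: One_nat_def)
lemma Tv_1_5: "bv_inner (xi 1) (act (\<Sum>g\<in>{1..6}. a g *\<^sub>R xi g) (xi 5)) = 0"
  unfolding act_sum_left bv_sum_right sum6 by (simp add: act_add_left bv_add_right act_scale_left bv_scale_right ac_table bv_scale_right bv_neg_right bv_diff_right xi_orth del: One_nat_def)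
lemma Tv_1_6: "bv_inner (xi 1) (act (\<Sum>g\<in>{1..6}. a g *\<^sub>R xi g) (xi 6)) = 0"
  unfolding act_sum_left bv_sum_right sum6 by (simp add: act_add_left bv_add_right act_scale_left bv_scale_right ac_table bv_scale_right bv_neg_right bv_diff_right xi_orth del: One_nat_def)
lemma Tv_2_1: "bv_inner (xi 2) (act (\<Sum>g\<in>{1..6}. a g *\<^sub>R xi g) (xi 1)) = sqrt 2 * a 3"
  unfolding act_sum_left bv_sum_right sum6 by (simp add: act_add_left bv_add_right act_scale_left bv_scale_right ac_table bv_scale_right bv_neg_right bv_diff_right xi_orth del: One_nat_def)
lemma Tv_2_2: "bv_inner (xi 2) (act (\<Sum>g\<in>{1..6}. a g *\<^sub>R xi g) (xi 2)) = 0"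
  unfolding act_sum_left bv_sum_right sum6 by (simp add: act_add_left bv_add_right act_scale_left bv_scale_right ac_table bv_scale_right bv_neg_right bv_diff_right xi_orth del: One_nat_def)
lemma Tv_2_3: "bv_inner (xi 2) (act (\<Sum>g\<in>{1..6}. a g *\<^sub>R xi g) (xi 3)) = - (sqrt 2 * a 1)"
  unfolding act_sum_left bv_sum_right sum6 by (simp add: act_add_left bv_add_right act_scale_left bv_scale_right ac_table bv_scale_right bv_neg_right bv_diff_right xi_orth del: One_nat_def)
lemma Tv_2_4: "bv_inner (xi 2) (act (\<Sum>g\<in>{1..6}. a g *\<^sub>R xi g) (xi 4)) = 0"
  unfolding act_sum_left bv_sum_right sum6 by (simp add: act_add_left bv_add_right act_scale_left bv_scale_right ac_table bv_scale_right bv_neg_right bv_diff_right xi_orth del: One_nat_def)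
lemma Tv_2_5: "bv_inner (xi 2) (act (\<Sum>g\<in>{1..6}. a g *\<^sub>R xi g) (xi 5)) = 0"
  unfolding act_sum_left bv_sum_right sum6 by (simp add: act_add_left bv_add_right act_scale_left bv_scale_right ac_table bv_scale_right bv_neg_right bv_diff_right xi_orth del: One_nat_def)
lemma Tv_2_6: "bv_inner (xi 2) (act (\<Sum>g\<in>{1..6}. a g *\<^sub>R xi g) (xi 6)) = 0"
  unfolding act_sum_left bv_sum_right sum6 by (simp add: act_add_left bv_add_right act_scale_left bv_scale_right ac_table bv_scale_right bv_neg_right bv_diff_right xi_orth del: One_nat_def)
lemma Tv_3_1: "bv_inner (xi 3) (act (\<Sum>g\<in>{1..6}. a g *\<^sub>R xi g) (xi 1)) = - (sqrt 2 * a 2)"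
  unfolding act_sum_left bv_sum_right sum6 by (simp add: act_add_left bv_add_right act_scale_left bv_scale_right ac_table bv_scale_right bv_neg_right bv_diff_right xi_orth del: One_nat_def)
lemma Tv_3_2: "bv_inner (xi 3) (act (\<Sum>g\<in>{1..6}. a g *\<^sub>R xi g) (xi 2)) = sqrt 2 * a 1"
  unfolding act_sum_left bv_sum_right sum6 by (simp add: act_add_left bv_add_right act_scale_left bv_scale_right ac_table bv_scale_right bv_neg_right bv_diff_right xi_orth del: One_nat_def)
lemma Tv_3_3: "bv_inner (xi 3) (act (\<Sum>g\<in>{1..6}. a g *\<^sub>R xi g) (xi 3)) = 0"
  unfolding act_sum_left bv_sum_right sum6 by (simp add: act_add_left bv_add_right act_scale_left bv_scale_right ac_table bv_scale_right bv_neg_right bv_diff_right xi_orth del: One_nat_def)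
lemma Tv_3_4: "bv_inner (xi 3) (act (\<Sum>g\<in>{1..6}. a g *\<^sub>R xi g) (xi 4)) = 0"
  unfolding act_sum_left bv_sum_right sum6 by (simp add: act_add_left bv_add_right act_scale_left bv_scale_right ac_table bv_scale_right bv_neg_right bv_diff_right xi_orth del: One_nat_def)
lemma Tv_3_5: "bv_inner (xi 3) (act (\<Sum>g\<in>{1..6}. a g *\<^sub>R xi g) (xi 5)) = 0"
  unfolding act_sum_left bv_sum_right sum6 by (simp add: act_add_left bv_add_right act_scale_left bv_scale_right ac_table bv_scale_right bv_neg_right bv_diff_right xi_orth del: One_nat_def)
lemma Tv_3_6: "bv_inner (xi 3) (act (\<Sum>g\<in>{1..6}. a g *\<^sub>R xi g) (xi 6)) = 0"
  unfolding act_sum_left bv_sum_right sum6 by (simp add: act_add_left bv_add_right act_scale_left bv_scale_right ac_table bv_scale_right bv_neg_right bv_diff_right xi_orth del: One_nat_def)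
lemma Tv_4_1: "bv_inner (xi 4) (act (\<Sum>g\<in>{1..6}. a g *\<^sub>R xi g) (xi 1)) = 0"
  unfolding act_sum_left bv_sum_right sum6 by (simp add: act_add_left bv_add_right act_scale_left bv_scale_right ac_table bv_scale_right bv_neg_right bv_diff_right xi_orth del: One_nat_def)
lemma Tv_4_2: "bv_inner (xi 4) (act (\<Sum>g\<in>{1..6}. a g *\<^sub>R xi g) (xi 2)) = 0"
  unfolding act_sum_left bv_sum_right sum6 by (simp add: act_add_left bv_add_right act_scale_left bv_scale_right ac_table bv_scale_right bv_neg_right bv_diff_right xi_orth del: One_nat_def)
lemma Tv_4_3: "bv_inner (xi 4) (act (\<Sum>g\<in>{1..6}. a g *\<^sub>R xi g) (xi 3)) = 0"
  unfolding act_sum_left bv_sum_right sum6 by (simp add: act_add_left bv_add_right act_scale_left bv_scale_right ac_table bv_scale_right bv_neg_right bv_diff_right xi_orth del: One_nat_def)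
lemma Tv_4_4: "bv_inner (xi 4) (act (\<Sum>g\<in>{1..6}. a g *\<^sub>R xi g) (xi 4)) = 0"
  unfolding act_sum_left bv_sum_right sum6 by (simp add: act_add_left bv_add_right act_scale_left bv_scale_right ac_table bv_scale_right bv_neg_right bv_diff_right xi_orth del: One_nat_def)
lemma Tv_4_5: "bv_inner (xi 4) (act (\<Sum>g\<in>{1..6}. a g *\<^sub>R xi g) (xi 5)) = sqrt 2 * a 6"
  unfolding act_sum_left bv_sum_right sum6 by (simp add: act_add_left bv_add_right act_scale_left bv_scale_right ac_table bv_scale_right bv_neg_right bv_diff_right xi_orth del: One_nat_def)
lemma Tv_4_6: "bv_inner (xi 4) (act (\<Sum>g\<in>{1..6}. a g *\<^sub>R xi g) (xi 6)) = - (sqrt 2 * a 5)"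
  unfolding act_sum_left bv_sum_right sum6 by (simp add: act_add_left bv_add_right act_scale_left bv_scale_right ac_table bv_scale_right bv_neg_right bv_diff_right xi_orth del: One_nat_def)
lemma Tv_5_1: "bv_inner (xi 5) (act (\<Sum>g\<in>{1..6}. a g *\<^sub>R xi g) (xi 1)) = 0"
  unfolding act_sum_left bv_sum_right sum6 by (simp add: act_add_left bv_add_right act_scale_left bv_scale_right ac_table bv_scale_right bv_neg_right bv_diff_right xi_orth del: One_nat_def)
lemma Tv_5_2: "bv_inner (xi 5) (act (\<Sum>g\<in>{1..6}. a g *\<^sub>R xi g) (xi 2)) = 0"
  unfolding act_sum_left bv_sum_right sum6 by (simp add: act_add_left bv_add_right act_scale_left bv_scale_right ac_table bv_scale_right bv_neg_right bv_diff_right xi_orth del: One_nat_def)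
lemma Tv_5_3: "bv_inner (xi 5) (act (\<Sum>g\<in>{1..6}. a g *\<^sub>R xi g) (xi 3)) = 0"
  unfolding act_sum_left bv_sum_right sum6 by (simp add: act_add_left bv_add_right act_scale_left bv_scale_right ac_table bv_scale_right bv_neg_right bv_diff_right xi_orth del: One_nat_def)
lemma Tv_5_4: "bv_inner (xi 5) (act (\<Sum>g\<in>{1..6}. a g *\<^sub>R xi g) (xi 4)) = - (sqrt 2 * a 6)"
  unfolding act_sum_left bv_sum_right sum6 by (simp add: act_add_left bv_add_right act_scale_left bv_scale_right ac_table bv_scale_right bv_neg_right bv_diff_right xi_orth del: One_nat_def)
lemma Tv_5_5: "bv_inner (xi 5) (act (\<Sum>g\<in>{1..6}. a g *\<^sub>R xi g) (xi 5)) = 0"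
  unfolding act_sum_left bv_sum_right sum6 by (simp add: act_add_left bv_add_right act_scale_left bv_scale_right ac_table bv_scale_right bv_neg_right bv_diff_right xi_orth del: One_nat_def)
lemma Tv_5_6: "bv_inner (xi 5) (act (\<Sum>g\<in>{1..6}. a g *\<^sub>R xi g) (xi 6)) = sqrt 2 * a 4"
  unfolding act_sum_left bv_sum_right sum6 by (simp add: act_add_left bv_add_right act_scale_left bv_scale_right ac_table bv_scale_right bv_neg_right bv_diff_right xi_orth del: One_nat_def)
lemma Tv_6_1: "bv_inner (xi 6) (act (\<Sum>g\<in>{1..6}. a g *\<^sub>R xi g) (xi 1)) = 0"
  unfolding act_sum_left bv_sum_right sum6 by (simp add: act_add_left bv_add_right act_scale_left bv_scale_right ac_table bv_scale_right bv_neg_right bv_diff_right xi_orth del: One_nat_def)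
lemma Tv_6_2: "bv_inner (xi 6) (act (\<Sum>g\<in>{1..6}. a g *\<^sub>R xi g) (xi 2)) = 0"
  unfolding act_sum_left bv_sum_right sum6 by (simp add: act_add_left bv_add_right act_scale_left bv_scale_right ac_table bv_scale_right bv_neg_right bv_diff_right xi_orth del: One_nat_def)
lemma Tv_6_3: "bv_inner (xi 6) (act (\<Sum>g\<in>{1..6}. a g *\<^sub>R xi g) (xi 3)) = 0"
  unfolding act_sum_left bv_sum_right sum6 by (simp add: act_add_left bv_add_right act_scale_left bv_scale_right ac_table bv_scale_right bv_neg_right bv_diff_right xi_orth del: One_nat_def)
lemma Tv_6_4: "bv_inner (xi 6) (act (\<Sum>g\<in>{1..6}. a g *\<^sub>R xi g) (xi 4)) = sqrt 2 * a 5"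
  unfolding act_sum_left bv_sum_right sum6 by (simp add: act_add_left bv_add_right act_scale_left bv_scale_right ac_table bv_scale_right bv_neg_right bv_diff_right xi_orth del: One_nat_def)
lemma Tv_6_5: "bv_inner (xi 6) (act (\<Sum>g\<in>{1..6}. a g *\<^sub>R xi g) (xi 5)) = - (sqrt 2 * a 4)"
  unfolding act_sum_left bv_sum_right sum6 by (simp add: act_add_left bv_add_right act_scale_left bv_scale_right ac_table bv_scale_right bv_neg_right bv_diff_right xi_orth del: One_nat_def)
lemma Tv_6_6: "bv_inner (xi 6) (act (\<Sum>g\<in>{1..6}. a g *\<^sub>R xi g) (xi 6)) = 0"
  unfolding act_sum_left bv_sum_right sum6 by (simp add: act_add_left bv_add_right act_scale_left bv_scale_right ac_table bv_scale_right bv_neg_right bv_diff_right xi_orth del: One_nat_def)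
lemmas Tv_table = Tv_1_1 Tv_1_2 Tv_1_3 Tv_1_4 Tv_1_5 Tv_1_6 Tv_2_1 Tv_2_2 Tv_2_3 Tv_2_4 Tv_2_5 Tv_2_6 Tv_3_1 Tv_3_2 Tv_3_3 Tv_3_4 Tv_3_5 Tv_3_6 Tv_4_1 Tv_4_2 Tv_4_3 Tv_4_4 Tv_4_5 Tv_4_6 Tv_5_1 Tv_5_2 Tv_5_3 Tv_5_4 Tv_5_5 Tv_5_6 Tv_6_1 Tv_6_2 Tv_6_3 Tv_6_4 Tv_6_5 Tv_6_6

lemma sq_help: "(p * (sqrt 2 * c) - q * (sqrt 2 * c))^2 = 2 * (c^2 * (p - q)^2)"
proof -
  have "(p * (sqrt 2 * c) - q * (sqrt 2 * c))^2 = (sqrt 2)^2 * (c^2 * (p - q)^2)"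
    by (simp add: power2_eq_square algebra_simps)
  thus ?thesis by simp
qed

lemma part2:
  fixes R :: "bivec \<Rightarrow> bivec \<Rightarrow> real" and e :: "4 \<Rightarrow> vec4" and lam a :: "nat \<Rightarrow> real"
  assumes S: "SymB R" and eo: "oriented_orthonormal e"
    and H: "\<forall>\<alpha>\<in>{1..6}. \<forall>X\<in>Lambda2. R (Xi e \<alpha>) X = lam \<alpha> * bv_inner (Xi e \<alpha>) X"
  shows "(let L = (\<Sum>\<alpha>=1..6. a \<alpha> *\<^sub>R Xi e \<alpha>);
               s = 4 * (  (a 1)^2 * (lam 2 - lam 3)^2 + (a 2)^2 * (lam 1 - lam 3)^2
                        + (a 3)^2 * (lam 1 - lam 2)^2 + (a 4)^2 * (lam 5 - lam 6)^2
                        + (a 5)^2 * (lam 4 - lam 6)^2 + (a 6)^2 * (lam 4 - lam 5)^2)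
           in form_normsq basis2 (form_act L R) = s
              \<and> s \<le> 4 * (lam_max R - lam_min R)^2 * bv_inner L L)"
proof -
  have bil: "bilinear R" and sym: "\<And>A B. R A B = R B A" using S unfolding SymB_def by auto
  define Ls where "Ls = (\<Sum>g\<in>{1..6}. a g *\<^sub>R xi g)"
  define L where "L = (\<Sum>\<alpha>=1..6. a \<alpha> *\<^sub>R Xi e \<alpha>)"
  have L_eq: "L = Phi e Ls" unfolding L_def Ls_def by (simp add: Phi_sum Phi_scale Phi_xi)
  have LL2: "L \<in> Lambda2" unfolding L_def by (intro L2_sum L2_scale L2_Xi)
  have nrm: "form_normsq basis2 (form_act L R) = (\<Sum>p\<in>{1..6}. \<Sum>q\<in>{1..6}. (form_act L R (Xi e p) (Xi e q))^2)"
    unfolding normsq_basis2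
    apply (rule change_basis_bil[where u=bb and v="Xi e"])
        apply (rule bil_form_act[OF bil])
       apply (rule Xe_exp[OF eo L2_bb])
      apply (rule basis2_exp[OF L2_Xi])
     apply (rule Xe_orth[OF eo]; assumption)
    by simp
  have Tinv: "bv_inner (Xi e q) (act L (Xi e p)) = bv_inner (xi q) (act Ls (xi p))" for p q
  proof -
    have "bv_inner (Xi e q) (act L (Xi e p)) = bv_inner (Phi e (xi q)) (act (Phi e Ls) (Phi e (xi p)))"
      by (simp only: L_eq Phi_xi)
    also have "\<dots> = bv_inner (xi q) (act Ls (xi p))"
      by (simp only: Phi_act[OF eo] Phi_inner[OF eo])
    finally show ?thesis .
  qed
  have F: "form_act L R (Xi e p) (Xi e q) = - lam q * bv_inner (xi q) (act Ls (xi p)) - lam p * bv_inner (xi p) (act Ls (xi q))"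
    if "p \<in> {1..6}" "q \<in> {1..6}" for p q
  proof -
    have A1: "R (act L (Xi e p)) (Xi e q) = lam q * bv_inner (Xi e q) (act L (Xi e p))"
      using H that(2) L2_act[OF LL2 L2_Xi] sym by metis
    have A2: "R (Xi e p) (act L (Xi e q)) = lam p * bv_inner (Xi e p) (act L (Xi e q))"
      using H that(1) L2_act[OF LL2 L2_Xi] by blast
    show ?thesis unfolding form_act_def A1 A2 Tinv by simp
  qed
  have r2: "sqrt 2 ^ 2 = (2::real)" by simp
  have s_eq: "form_normsq basis2 (form_act L R) = 4 * (  (a 1)^2 * (lam 2 - lam 3)^2 + (a 2)^2 * (lam 1 - lam 3)^2
                        + (a 3)^2 * (lam 1 - lam 2)^2 + (a 4)^2 * (lam 5 - lam 6)^2
                        + (a 5)^2 * (lam 4 - lam 6)^2 + (a 6)^2 * (lam 4 - lam 5)^2)"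
    unfolding nrm sum6
    apply (simp add: F del: One_nat_def)
    unfolding Ls_def
    apply (simp add: Tv_table sq_help del: One_nat_def)
    by (simp add: power2_eq_square algebra_simps)
  have LL: "bv_inner L L = (a 1)^2 + (a 2)^2 + (a 3)^2 + (a 4)^2 + (a 5)^2 + (a 6)^2"
    unfolding L_eq Phi_inner[OF eo] Ls_def bv_sum_left bv_sum_right sum6
    by (simp add: bv_scale_left bv_scale_right bv_add_left bv_add_right xi_orth power2_eq_square del: One_nat_def)
  have mem: "lam p \<in> eigvals R" if p: "p \<in> {1..6}" for p
  proof -
    have "Xi e p \<noteq> 0" using Xe_orth[OF eo p p] by (auto simp: bv_inner_def)
    moreover have "\<forall>Y\<in>Lambda2. R (Xi e p) Y = lam p * bv_inner (Xi e p) Y" using H p by blast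
    ultimately show ?thesis unfolding eigvals_def using L2_Xi by blast
  qed
  have sub: "eigvals R \<subseteq> lam ` {1..6}"
  proof
    fix mu assume "mu \<in> eigvals R"
    then obtain X where X: "X \<in> Lambda2" "X \<noteq> 0" and XY: "\<forall>Y\<in>Lambda2. R X Y = mu * bv_inner X Y"
      unfolding eigvals_def by blast
    show "mu \<in> lam ` {1..6}"
    proof (rule ccontr)
      assume nm: "mu \<notin> lam ` {1..6}"
      have c0: "bv_inner X (Xi e p) = 0" if p: "p \<in> {1..6}" for p
      proof -
        have "R X (Xi e p) = mu * bv_inner X (Xi e p)" using XY L2_Xi by blast
        moreover have "R X (Xi e p) = lam p * bv_inner X (Xi e p)"
          using H p X(1) sym bv_sym by metis
        moreover have "mu \<noteq> lam p" using nm p by blast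
        ultimately show ?thesis by simp
      qed
      have "X = (\<Sum>p\<in>{1..6}. bv_inner X (Xi e p) *\<^sub>R Xi e p)" by (rule Xe_exp[OF eo X(1)])
      also have "\<dots> = 0" by (simp add: c0)
      finally show False using X(2) by simp
    qed
  qed
  have fin: "finite (eigvals R)" using sub finite_subset by blast
  have bnd: "lam_min R \<le> lam p \<and> lam p \<le> lam_max R" if "p \<in> {1..6}" for p
    unfolding lam_min_def lam_max_def using Min_le[OF fin mem[OF that]] Max_ge[OF fin mem[OF that]] by simp
  define D where "D = (lam_max R - lam_min R)^2"
  have dle: "(lam p - lam q)^2 \<le> D" if "p \<in> {1..6}" "q \<in> {1..6}" for p q
  proof -
    have "\<bar>lam p - lam q\<bar> \<le> lam_max R - lam_min R" using bnd[OF that(1)] bnd[OF that(2)] by linarith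
    hence "\<bar>lam p - lam q\<bar>^2 \<le> (lam_max R - lam_min R)^2" by (rule power_mono) simp
    thus ?thesis unfolding D_def by simp
  qed
  have ml: "(a g)^2 * (lam p - lam q)^2 \<le> (a g)^2 * D" if "p \<in> {1..6}" "q \<in> {1..6}" for g p q
    by (rule mult_left_mono[OF dle[OF that]]) simp
  have ineq: "4 * (  (a 1)^2 * (lam 2 - lam 3)^2 + (a 2)^2 * (lam 1 - lam 3)^2
                        + (a 3)^2 * (lam 1 - lam 2)^2 + (a 4)^2 * (lam 5 - lam 6)^2
                        + (a 5)^2 * (lam 4 - lam 6)^2 + (a 6)^2 * (lam 4 - lam 5)^2)
        \<le> 4 * D * bv_inner L L"
  proof -
    have e: "4 * D * bv_inner L L = 4 * ((a 1)^2 * D + (a 2)^2 * D + (a 3)^2 * D + (a 4)^2 * D + (a 5)^2 * D + (a 6)^2 * D)"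
      unfolding LL by (simp add: algebra_simps)
    show ?thesis unfolding e
      using ml[of 2 3 1] ml[of 1 3 2] ml[of 1 2 3] ml[of 5 6 4] ml[of 4 6 5] ml[of 4 5 6] by simp
  qed
  show ?thesis unfolding Let_def L_def[symmetric] using s_eq ineq unfolding D_def by simp
qed

theorem proposition2p6:
  fixes R :: "bivec \<Rightarrow> bivec \<Rightarrow> real"
  assumes "SymB R" and "Einstein R"
  shows "(\<forall>L\<in>Lambda2. form_normsq basis2 (form_act L R) =
            form_normsq basisP (form_act (projP L) R) + form_normsq basisM (form_act (projM L) R))
     \<and> (\<forall>(e :: 4 \<Rightarrow> vec4) (lam :: nat \<Rightarrow> real) (a :: nat \<Rightarrow> real).
          oriented_orthonormal e \<longrightarrow>
          (\<forall>\<alpha>\<in>{1..6}. \<forall>X\<in>Lambda2. R (Xi e \<alpha>) X = lam \<alpha> * bv_inner (Xi e \<alpha>) X) \<longrightarrow>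
          (let L = (\<Sum>\<alpha>=1..6. a \<alpha> *\<^sub>R Xi e \<alpha>);
               s = 4 * (  (a 1)^2 * (lam 2 - lam 3)^2 + (a 2)^2 * (lam 1 - lam 3)^2
                        + (a 3)^2 * (lam 1 - lam 2)^2 + (a 4)^2 * (lam 5 - lam 6)^2
                        + (a 5)^2 * (lam 4 - lam 6)^2 + (a 6)^2 * (lam 4 - lam 5)^2)
           in form_normsq basis2 (form_act L R) = s
              \<and> s \<le> 4 * (lam_max R - lam_min R)^2 * bv_inner L L))"
  proof (intro conjI allI impI ballI)
  fix L assume "L \<in> Lambda2"
  then show "form_normsq basis2 (form_act L R) =
            form_normsq basisP (form_act (projP L) R) + form_normsq basisM (form_act (projM L) R)"
    using part1[OF assms] by blast
next
  fix e :: "4 \<Rightarrow> vec4" and lam a :: "nat \<Rightarrow> real"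
  assume "oriented_orthonormal e" "\<forall>\<alpha>\<in>{1..6}. \<forall>X\<in>Lambda2. R (Xi e \<alpha>) X = lam \<alpha> * bv_inner (Xi e \<alpha>) X"
  then show "let L = (\<Sum>\<alpha>=1..6. a \<alpha> *\<^sub>R Xi e \<alpha>);
               s = 4 * (  (a 1)^2 * (lam 2 - lam 3)^2 + (a 2)^2 * (lam 1 - lam 3)^2
                        + (a 3)^2 * (lam 1 - lam 2)^2 + (a 4)^2 * (lam 5 - lam 6)^2
                        + (a 5)^2 * (lam 4 - lam 6)^2 + (a 6)^2 * (lam 4 - lam 5)^2)
           in form_normsq basis2 (form_act L R) = s
              \<and> s \<le> 4 * (lam_max R - lam_min R)^2 * bv_inner L L"
    using part2[OF assms(1)] by blast
qed

end
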